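(* Let $f:2^{\mathcal{E}_x}\to\mathbb{R}_{\ge 0}$ be normalized, monotone and submodular, let $\Delta\ge1$ be the maximum vertex degree of $\mathcal{G}$, and consider $(\mathrm{P}_1)$ under the constraint TU$_b$ (maximize $f(\mathcal{E})$ over $\mathcal{E}\subseteq\mathcal{E}_x$ with $|\mathcal{E}|\le k$ and some vertex cover $\mathcal{V}$ of $\mathcal{E}$ with $|\mathcal{V}|\le b$), with optimal value $\mathrm{OPT}_1$. The algorithm Submodular-Greedy, which runs both Edge-Greedy and Vertex-Greedy and returns whichever of the two returned edge sets has the larger $f$-value, returns a feasible solution with value at least $\alpha(b,k,\Delta)\cdot\mathrm{OPT}_1$, where $\alpha(b,k,\Delta)=1-\exp(-\min\{1,\gamma\})$ and $\gamma=\max\{b/k,\ \lfloor k/\Delta\rfloor/b\}$.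
   Context: $\mathcal{G}=(\mathcal{V}_x,\mathcal{E}_x)$ is a finite simple undirected graph; $b,k\ge1$ are integers. For $\mathcal{V}\subseteq\mathcal{V}_x$, $\mathsf{edges}(\mathcal{V})$ is the set of edges incident to at least one vertex of $\mathcal{V}$. A set function $h$ is normalized if $h(\varnothing)=0$, monotone if $h(A)\le h(B)$ for $A\subseteq B$, submodular if $h(A)+h(B)\ge h(A\cup B)+h(A\cap B)$. Edge-Greedy: Phase I: start with $\mathcal{E}_{\mathrm{grd}}=\varnothing$; for $\min(b,k)$ iterations (or until no edges remain), add an edge $e^\star\in\arg\max_{e\in\mathcal{E}_x\setminus\mathcal{E}_{\mathrm{grd}}}f(\mathcal{E}_{\mathrm{grd}}\cup\{e\})$; then let $\mathcal{V}_{\mathrm{grd}}$ be a vertex cover of $\mathcal{E}_{\mathrm{grd}}$ obtained by choosing one endpoint of each selected edge. Phase II (only if $k>b$): let $\mathcal{E}_{\mathrm{free}}=\mathsf{edges}(\mathcal{V}_{\mathrm{grd}})\setminus\mathcal{E}_{\mathrm{grd}}$; for $\min(|\mathcal{E}_{\mathrm{free}}|,k-b)$ iterations add $e^\star\in\arg\max_{e\in\mathcal{E}_{\mathrm{free}}\setminus\mathcal{E}_{\mathrm{grd}}}f(\mathcal{E}_{\mathrm{grd}}\cup\{e\})$; return $\mathcal{E}_{\mathrm{grd}}$. Vertex-Greedy: with $h(\mathcal{V})=f(\mathsf{edges}(\mathcal{V}))$, start with $\mathcal{V}_{\mathrm{grd}}=\varnothing$ and repeat: pick $v^\star\in\arg\max_{v\in\mathcal{V}_x\setminus\mathcal{V}_{\mathrm{grd}}}h(\mathcal{V}_{\mathrm{grd}}\cup\{v\})$;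 if $|\mathcal{V}_{\mathrm{grd}}\cup\{v^\star\}|>b$ or $|\mathsf{edges}(\mathcal{V}_{\mathrm{grd}}\cup\{v^\star\})|>k$ (or no vertex remains), stop; else add $v^\star$ to $\mathcal{V}_{\mathrm{grd}}$. Return $\mathsf{edges}(\mathcal{V}_{\mathrm{grd}})$. *)

theory Defs
  imports Complex_Main
begin

definition simple_graph :: "'a set \<Rightarrow> 'a set set \<Rightarrow> bool" where
  "simple_graph V E \<longleftrightarrow> finite V \<and>
     (\<forall>e\<in>E. \<exists>u v. u \<in> V \<and> v \<in> V \<and> u \<noteq> v \<and> e = {u, v})"

definition edges_of :: "'a set set \<Rightarrow> 'a set \<Rightarrow> 'a set set" where
  "edges_of E Vs = {e \<in> E. e \<inter> Vs \<noteq> {}}"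

definition is_vertex_cover :: "'a set \<Rightarrow> 'a set set \<Rightarrow> bool" where
  "is_vertex_cover Vc F \<longleftrightarrow> (\<forall>e\<in>F. e \<inter> Vc \<noteq> {})"

definition max_degree :: "'a set \<Rightarrow> 'a set set \<Rightarrow> nat" where
  "max_degree V E = Max ((\<lambda>v. card {e \<in> E. v \<in> e}) ` V)"

definition normalized :: "'b set \<Rightarrow> ('b set \<Rightarrow> real) \<Rightarrow> bool" where
  "normalized U h \<longleftrightarrow> h {} = 0"

definition monotone_set_fun :: "'b set \<Rightarrow> ('b set \<Rightarrow> real) \<Rightarrow> bool" where
  "monotone_set_fun U h \<longleftrightarrow> (\<forall>A B. A \<subseteq> B \<and> B \<subseteq> U \<longrightarrow> h A \<le> h B)"

definition submodular :: "'b set \<Rightarrow> ('b set \<Rightarrow> real) \<Rightarrow> bool" where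
  "submodular U h \<longleftrightarrow>
     (\<forall>A B. A \<subseteq> U \<and> B \<subseteq> U \<longrightarrow> h A + h B \<ge> h (A \<union> B) + h (A \<inter> B))"

definition feasible_TU :: "'a set \<Rightarrow> 'a set set \<Rightarrow> nat \<Rightarrow> nat \<Rightarrow> 'a set set \<Rightarrow> bool" where
  "feasible_TU V E b k F \<longleftrightarrow> F \<subseteq> E \<and> card F \<le> k \<and>
     (\<exists>Vc. Vc \<subseteq> V \<and> is_vertex_cover Vc F \<and> card Vc \<le> b)"

definition greedy_run :: "('b set \<Rightarrow> real) \<Rightarrow> 'b set \<Rightarrow> 'b set \<Rightarrow> nat \<Rightarrow> 'b list \<Rightarrow> bool" where
  "greedy_run h S0 C n xs \<longleftrightarrow>
     length xs = min n (card C) \<and> distinct xs \<and> set xs \<subseteq> C \<and>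
     (\<forall>i < length xs. \<forall>x \<in> C - set (take i xs).
        h (S0 \<union> set (take i xs) \<union> {x}) \<le> h (S0 \<union> set (take i xs) \<union> {xs ! i}))"

text \<open>Edge-Greedy: Fout is a possible output (for some tie-breaking and some choice of
  endpoints in the vertex cover).\<close>
definition edge_greedy_output ::
  "'a set set \<Rightarrow> ('a set set \<Rightarrow> real) \<Rightarrow> nat \<Rightarrow> nat \<Rightarrow> 'a set set \<Rightarrow> bool" where
  "edge_greedy_output E f b k Fout \<longleftrightarrow>
     (\<exists>es g. greedy_run f {} E (min b k) es \<and> (\<forall>e \<in> set es. g e \<in> e) \<and>
        (let Egrd = set es; Vgrd = g ` set es in
          (if k > b then
             (\<exists>fs. greedy_run f Egrd (edges_of E Vgrd - Egrd) (k - b) fs \<and>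
                   Fout = Egrd \<union> set fs)
           else Fout = Egrd)))"

text \<open>Vertex-Greedy: vs lists the vertices added; the run stops either when no vertex
  remains or when the greedily chosen next vertex would violate a budget.\<close>
definition vertex_greedy_output ::
  "'a set \<Rightarrow> 'a set set \<Rightarrow> ('a set set \<Rightarrow> real) \<Rightarrow> nat \<Rightarrow> nat \<Rightarrow> 'a set set \<Rightarrow> bool" where
  "vertex_greedy_output V E f b k Fout \<longleftrightarrow>
     (\<exists>vs. let h = (\<lambda>Vs. f (edges_of E Vs)) in
        distinct vs \<and> set vs \<subseteq> V \<and>
        (\<forall>i < length vs. \<forall>v \<in> V - set (take i vs).
            h (set (take i vs) \<union> {v}) \<le> h (set (take i vs) \<union> {vs ! i})) \<and>
        length vs \<le> b \<and> card (edges_of E (set vs)) \<le> k \<and>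
        (set vs = V \<or>
         (\<exists>v \<in> V - set vs. (\<forall>u \<in> V - set vs. h (set vs \<union> {u}) \<le> h (set vs \<union> {v})) \<and>
             (card (set vs \<union> {v}) > b \<or> card (edges_of E (set vs \<union> {v})) > k))) \<and>
        Fout = edges_of E (set vs))"

definition alpha_bound :: "nat \<Rightarrow> nat \<Rightarrow> nat \<Rightarrow> real" where
  "alpha_bound b k \<Delta> =
     (let \<gamma> = max (real b / real k) (real (k div \<Delta>) / real b)
      in 1 - exp (- min 1 \<gamma>))"

end

theory Submission
  imports Defs
begin


lemma sub_sum:
  fixes h :: "'b set \<Rightarrow> real"
  assumes mono: "\<And>A B. A \<subseteq> B \<Longrightarrow> B \<subseteq> U \<Longrightarrow> h A \<le> h B"
  and sub: "\<And>A B. A \<subseteq> U \<Longrightarrow> B \<subseteq> U \<Longrightarrow> h (A \<union> B) + h (A \<inter> B) \<le> h A + h B"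
  and "finite P" "P \<subseteq> U" "A \<subseteq> U"
  shows "h (A \<union> P) \<le> h A + (\<Sum>x\<in>P. h (A \<union> {x}) - h A)"
using assms(3,4) proof (induction P rule: finite_induct)
  case empty show ?case by simp
next
  case (insert x P)
  have IH: "h (A \<union> P) \<le> h A + (\<Sum>x\<in>P. h (A \<union> {x}) - h A)" using insert by auto
  have s: "h ((A \<union> P) \<union> (A \<union> {x})) + h ((A \<union> P) \<inter> (A \<union> {x})) \<le> h (A \<union> P) + h (A \<union> {x})"
    by (rule sub) (use insert assms(5) in auto)
  have m: "h A \<le> h ((A \<union> P) \<inter> (A \<union> {x}))" by (rule mono) (use insert assms(5) in auto)
  have e: "(A \<union> P) \<union> (A \<union> {x}) = A \<union> insert x P" by auto
  show ?case using IH s m e insert(1,2) by simp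
qed

lemma greedy_bound:
  fixes h :: "'b set \<Rightarrow> real" and m :: nat
  assumes mono: "\<And>A B. A \<subseteq> B \<Longrightarrow> B \<subseteq> U \<Longrightarrow> h A \<le> h B"
  and sub: "\<And>A B. A \<subseteq> U \<Longrightarrow> B \<subseteq> U \<Longrightarrow> h (A \<union> B) + h (A \<inter> B) \<le> h A + h B"
  and xsC: "set xs \<subseteq> C" and CU: "C \<subseteq> U" and fO: "finite P" and OC: "P \<subseteq> C"
  and cO: "card P \<le> m" and m1: "m \<ge> 1"
  and greedy: "\<forall>i<length xs. \<forall>x\<in>C - set (take i xs). h (set (take i xs) \<union> {x}) \<le> h (set (take i xs) \<union> {xs ! i})"
  and h0: "h {} = 0" and hO: "h P \<ge> 0"
  shows "(1 - (1 - 1/real m) ^ length xs) * h P \<le> h (set xs)"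
proof -
  define S where "S i = set (take i xs)" for i
  have SU: "S i \<subseteq> U" for i unfolding S_def using xsC CU by (meson set_take_subset subset_trans)
  have step: "h P - h (S (Suc i)) \<le> (1 - 1/real m) * (h P - h (S i))" if i: "i < length xs" for i
  proof -
    have Suc: "S (Suc i) = S i \<union> {xs ! i}" unfolding S_def using i by (simp add: take_Suc_conv_app_nth)
    define d where "d = h (S (Suc i)) - h (S i)"
    have d0: "0 \<le> d" unfolding d_def using mono[of "S i" "S (Suc i)"] Suc SU by auto
    have trm: "h (S i \<union> {x}) - h (S i) \<le> d" if x: "x \<in> P" for x
    proof (cases "x \<in> S i")
      case True then have "S i \<union> {x} = S i" by auto
      then show ?thesis using d0 by simp
    next
      case False then have "x \<in> C - S i" using x OC by auto
      then show ?thesis using greedy i Suc unfolding d_def S_def by auto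
    qed
    have "h P \<le> h (S i \<union> P)" by (rule mono) (use SU OC CU in auto)
    also have "\<dots> \<le> h (S i) + (\<Sum>x\<in>P. h (S i \<union> {x}) - h (S i))"
      using sub_sum[where U=U and h=h, OF mono sub fO _ SU] OC CU by blast
    also have "(\<Sum>x\<in>P. h (S i \<union> {x}) - h (S i)) \<le> (\<Sum>x\<in>P. d)" by (rule sum_mono) (rule trm)
    also have "(\<Sum>x\<in>P. d) = real (card P) * d" by simp
    also have "\<dots> \<le> real m * d" using d0 cO by (simp add: mult_right_mono)
    finally have "h P - h (S i) \<le> real m * d" by simp
    then have "real m * (h P - h (S (Suc i))) \<le> (real m - 1) * (h P - h (S i))"
      unfolding d_def by (simp add: algebra_simps)
    then have "(h P - h (S (Suc i))) \<le> ((real m - 1) / real m) * (h P - h (S i))"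
      using m1 by (simp add: field_simps)
    moreover have "(real m - 1) / real m = 1 - 1 / real m" using m1 by (simp add: field_simps)
    ultimately show ?thesis by simp
  qed
  have q0: "0 \<le> 1 - 1/real m" using m1 by simp
  have iter: "h P - h (S i) \<le> (1 - 1/real m)^i * h P" if "i \<le> length xs" for i
    using that proof (induction i)
    case 0 then show ?case using h0 by (simp add: S_def)
  next
    case (Suc i)
    have "h P - h (S (Suc i)) \<le> (1 - 1/real m) * (h P - h (S i))" using step Suc by simp
    also have "\<dots> \<le> (1 - 1/real m) * ((1 - 1/real m)^i * h P)"
      by (rule mult_left_mono) (use Suc q0 in auto)
    finally show ?case by simp
  qed
  from iter[of "length xs"] show ?thesis by (simp add: S_def algebra_simps)
qed

lemma pow_exp: assumes "m \<ge> (1::nat)" shows "(1 - 1/real m)^t \<le> exp (- real t / real m)"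
proof -
  have "(1 - 1/real m)^t \<le> exp (-1/real m)^t"
    by (rule power_mono) (use assms exp_ge_add_one_self[of "-1/real m"] in auto)
  also have "\<dots> = exp (- real t / real m)" by (simp add: exp_of_nat_mult[symmetric])
  finally show ?thesis .
qed


lemma edges_card_le:
  assumes fV: "finite V" and fE: "finite E" and XV: "X \<subseteq> V"
  shows "card (edges_of E X) \<le> card X * max_degree V E"
proof -
  have fX: "finite X" using fV XV finite_subset by blast
  have eq: "edges_of E X = (\<Union>v\<in>X. {e\<in>E. v\<in>e})" unfolding edges_of_def by auto
  have "card (\<Union>v\<in>X. {e\<in>E. v\<in>e}) \<le> (\<Sum>v\<in>X. card {e\<in>E. v\<in>e})" by (rule card_UN_le[OF fX])
  also have "\<dots> \<le> of_nat (card X) * max_degree V E"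
  proof (rule sum_bounded_above)
    fix v assume "v \<in> X"
    then have "v \<in> V" using XV by auto
    then show "card {e\<in>E. v\<in>e} \<le> max_degree V E" unfolding max_degree_def
      using fV by (intro Max_ge) auto
  qed
  finally show ?thesis using eq by simp
qed

lemma feg_props:
  assumes "edge_greedy_output E f b k Feg"
  shows "\<exists>es. greedy_run f {} E (min b k) es \<and> set es \<subseteq> Feg \<and> Feg \<subseteq> E"
proof -
  from assms obtain es g where gr: "greedy_run f {} E (min b k) es"
    and rest: "(if k > b then
             (\<exists>fs. greedy_run f (set es) (edges_of E (g ` set es) - set es) (k - b) fs \<and>
                   Feg = set es \<union> set fs)
           else Feg = set es)"
    unfolding edge_greedy_output_def Let_def by blast
  have "set es \<subseteq> E" using gr unfolding greedy_run_def by auto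
  moreover have "set es \<subseteq> Feg \<and> Feg \<subseteq> E"
  proof (cases "k > b")
    case True
    then obtain fs where "greedy_run f (set es) (edges_of E (g ` set es) - set es) (k - b) fs"
      "Feg = set es \<union> set fs" using rest by auto
    then show ?thesis using \<open>set es \<subseteq> E\<close> unfolding greedy_run_def edges_of_def by auto
  next
    case False then show ?thesis using rest \<open>set es \<subseteq> E\<close> by auto
  qed
  ultimately show ?thesis using gr by blast
qed

lemma feg_feasible:
  assumes EV: "\<forall>e\<in>E. e \<subseteq> V" and "edge_greedy_output E f b k Feg"
  shows "feasible_TU V E b k Feg"
proof -
  from assms obtain es g where gr: "greedy_run f {} E (min b k) es"
    and ge: "\<forall>e \<in> set es. g e \<in> e"
    and rest: "(if k > b then
             (\<exists>fs. greedy_run f (set es) (edges_of E (g ` set es) - set es) (k - b) fs \<and>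
                   Feg = set es \<union> set fs)
           else Feg = set es)"
    unfolding edge_greedy_output_def Let_def by blast
  have esE: "set es \<subseteq> E" and les: "length es \<le> min b k" and des: "distinct es"
    using gr unfolding greedy_run_def by auto
  have cVc: "card (g ` set es) \<le> b"
    using card_image_le[of "set es" g] les distinct_card[OF des] by auto
  have VcV: "g ` set es \<subseteq> V" using ge esE EV by auto
  have cov_es: "\<forall>e\<in>set es. e \<inter> g ` set es \<noteq> {}" using ge by auto
  show ?thesis
  proof (cases "k > b")
    case True
    then obtain fs where gf: "greedy_run f (set es) (edges_of E (g ` set es) - set es) (k - b) fs"
      and F: "Feg = set es \<union> set fs" using rest by auto
    have fsE: "set fs \<subseteq> edges_of E (g ` set es)" and lfs: "length fs \<le> k - b"
      using gf unfolding greedy_run_def by auto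
    have "card Feg \<le> card (set es) + card (set fs)" unfolding F by (rule card_Un_le)
    also have "\<dots> \<le> length es + length fs" by (simp add: card_length add_mono)
    also have "\<dots> \<le> k" using les lfs True by linarith
    finally have ck: "card Feg \<le> k" .
    have FE: "Feg \<subseteq> E" using esE fsE F unfolding edges_of_def by auto
    have cov: "is_vertex_cover (g ` set es) Feg" unfolding is_vertex_cover_def F
      using cov_es fsE unfolding edges_of_def by auto
    show ?thesis unfolding feasible_TU_def using FE ck VcV cVc cov by blast
  next
    case False
    then have F: "Feg = set es" using rest by auto
    have "card Feg \<le> k" unfolding F using card_length[of es] les by linarith
    moreover have "is_vertex_cover (g ` set es) Feg" unfolding is_vertex_cover_def F
      using cov_es by auto
    ultimately show ?thesis unfolding feasible_TU_def using esE VcV cVc F by blast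
  qed
qed

lemma fvg_unfold:
  assumes "vertex_greedy_output V E f b k Fvg"
  shows "\<exists>vs. distinct vs \<and> set vs \<subseteq> V \<and>
        (\<forall>i < length vs. \<forall>v \<in> V - set (take i vs).
            f (edges_of E (set (take i vs) \<union> {v})) \<le> f (edges_of E (set (take i vs) \<union> {vs ! i}))) \<and>
        length vs \<le> b \<and> card (edges_of E (set vs)) \<le> k \<and>
        (set vs = V \<or>
         (\<exists>v \<in> V - set vs. 
             (card (set vs \<union> {v}) > b \<or> card (edges_of E (set vs \<union> {v})) > k))) \<and>
        Fvg = edges_of E (set vs)"
proof -
  from assms obtain vs where H: "distinct vs \<and> set vs \<subseteq> V \<and>
        (\<forall>i < length vs. \<forall>v \<in> V - set (take i vs).
            f (edges_of E (set (take i vs) \<union> {v})) \<le> f (edges_of E (set (take i vs) \<union> {vs ! i}))) \<and>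
        length vs \<le> b \<and> card (edges_of E (set vs)) \<le> k \<and>
        (set vs = V \<or>
         (\<exists>v \<in> V - set vs. (\<forall>u \<in> V - set vs. f (edges_of E (set vs \<union> {u})) \<le> f (edges_of E (set vs \<union> {v}))) \<and>
             (card (set vs \<union> {v}) > b \<or> card (edges_of E (set vs \<union> {v})) > k))) \<and>
        Fvg = edges_of E (set vs)"
    unfolding vertex_greedy_output_def Let_def by (elim exE) (rule that)
  then have "set vs = V \<or> (\<exists>v \<in> V - set vs. 
             (card (set vs \<union> {v}) > b \<or> card (edges_of E (set vs \<union> {v})) > k))" by blast
  with H show ?thesis by blast
qed

lemma fvg_feasible:
  assumes "vertex_greedy_output V E f b k Fvg"
  shows "feasible_TU V E b k Fvg"
proof -
  from fvg_unfold[OF assms] obtain vs where "distinct vs" "set vs \<subseteq> V" "length vs \<le> b"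
    "card (edges_of E (set vs)) \<le> k" "Fvg = edges_of E (set vs)" by blast
  note h = this
  have "Fvg \<subseteq> E" unfolding h(5) edges_of_def by auto
  moreover have "is_vertex_cover (set vs) Fvg" unfolding h(5) edges_of_def is_vertex_cover_def by auto
  moreover have "card (set vs) \<le> b" using h(1,3) distinct_card by metis
  ultimately show ?thesis unfolding feasible_TU_def using h by blast
qed



lemma feg_value:
  fixes f :: "'a set set \<Rightarrow> real"
  assumes fE: "finite E"
  and mono: "\<And>A B. A \<subseteq> B \<Longrightarrow> B \<subseteq> E \<Longrightarrow> f A \<le> f B"
  and sub: "\<And>A B. A \<subseteq> E \<Longrightarrow> B \<subseteq> E \<Longrightarrow> f (A \<union> B) + f (A \<inter> B) \<le> f A + f B"
  and f0: "f {} = 0" and k1: "k \<ge> 1"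
  and feas: "feasible_TU V E b k F" and fF: "f F \<ge> 0"
  and eg: "edge_greedy_output E f b k Feg"
  shows "(1 - exp (- min 1 (real b / real k))) * f F \<le> f Feg"
proof -
  obtain es where gr: "greedy_run f {} E (min b k) es" and sF: "set es \<subseteq> Feg" and FE: "Feg \<subseteq> E"
    using feg_props[OF eg] by blast
  have esE: "set es \<subseteq> E" and les: "length es = min (min b k) (card E)" and des: "distinct es"
    and grd: "\<forall>i<length es. \<forall>x\<in>E - set (take i es). f (set (take i es) \<union> {x}) \<le> f (set (take i es) \<union> {es ! i})"
    using gr unfolding greedy_run_def by auto
  have FE': "F \<subseteq> E" and cF: "card F \<le> k" using feas unfolding feasible_TU_def by auto
  have fin: "f (set es) \<le> f Feg" using mono sF FE by blast
  have a1: "1 - exp (- min 1 (real b / real k)) \<le> 1" by simp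
  show ?thesis
  proof (cases "card E \<le> min b k")
    case True
    then have "card (set es) = card E" using les distinct_card[OF des] by simp
    then have "set es = E" using card_subset_eq[OF fE esE] by simp
    then have "f F \<le> f (set es)" using mono FE' by simp
    moreover have "(1 - exp (- min 1 (real b / real k))) * f F \<le> 1 * f F"
      by (rule mult_right_mono[OF a1 fF])
    ultimately show ?thesis using fin by simp
  next
    case False
    then have t: "length es = min b k" using les by (auto simp: min_def)
    have fF': "finite F" using fE FE' finite_subset by blast
    have "(1 - (1 - 1/real k) ^ length es) * f F \<le> f (set es)"
      by (rule greedy_bound[where U=E and C=E, OF mono sub esE order.refl fF' FE' cF k1 grd f0 fF])
    moreover have "(1 - 1/real k) ^ length es \<le> exp (- real (length es) / real k)"
      by (rule pow_exp[OF k1])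
    moreover have "real (length es) / real k = min 1 (real b / real k)"
      using t k1 by (cases "b \<le> k") (auto simp: min_def)
    ultimately have "(1 - exp (- min 1 (real b / real k))) * f F \<le> f (set es)"
      by (smt (verit, best) fF minus_divide_left mult_right_mono)
    then show ?thesis using fin by simp
  qed
qed

lemma fvg_value:
  fixes f :: "'a set set \<Rightarrow> real"
  assumes fV: "finite V" and fE: "finite E"
  and mono: "\<And>A B. A \<subseteq> B \<Longrightarrow> B \<subseteq> E \<Longrightarrow> f A \<le> f B"
  and sub: "\<And>A B. A \<subseteq> E \<Longrightarrow> B \<subseteq> E \<Longrightarrow> f (A \<union> B) + f (A \<inter> B) \<le> f A + f B"
  and nonneg: "\<forall>A \<subseteq> E. f A \<ge> 0"
  and f0: "f {} = 0" and b1: "b \<ge> 1" and D1: "max_degree V E \<ge> 1"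
  and feas: "feasible_TU V E b k F"
  and vg: "vertex_greedy_output V E f b k Fvg"
  shows "(1 - exp (- min 1 (real (k div max_degree V E) / real b))) * f F \<le> f Fvg"
proof -
  define \<Delta> where "\<Delta> = max_degree V E"
  define hv where "hv X = f (edges_of E X)" for X
  have eE: "edges_of E X \<subseteq> E" for X unfolding edges_of_def by auto
  have monoV: "hv A \<le> hv B" if "A \<subseteq> B" "B \<subseteq> V" for A B
    unfolding hv_def by (rule mono) (use that eE in \<open>auto simp: edges_of_def\<close>)
  have subV: "hv (A \<union> B) + hv (A \<inter> B) \<le> hv A + hv B" if "A \<subseteq> V" "B \<subseteq> V" for A B
  proof -
    have u: "edges_of E (A \<union> B) = edges_of E A \<union> edges_of E B" unfolding edges_of_def by auto
    have i: "edges_of E (A \<inter> B) \<subseteq> edges_of E A \<inter> edges_of E B" unfolding edges_of_def by auto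
    have "f (edges_of E (A \<inter> B)) \<le> f (edges_of E A \<inter> edges_of E B)" by (rule mono[OF i]) (use eE in auto)
    moreover have "f (edges_of E A \<union> edges_of E B) + f (edges_of E A \<inter> edges_of E B) \<le> hv A + hv B"
      unfolding hv_def by (rule sub[OF eE eE])
    ultimately show ?thesis unfolding hv_def u by linarith
  qed
  obtain vs where des: "distinct vs" and vsV: "set vs \<subseteq> V"
    and grd: "\<forall>i < length vs. \<forall>v \<in> V - set (take i vs).
            hv (set (take i vs) \<union> {v}) \<le> hv (set (take i vs) \<union> {vs ! i})"
    and lvs: "length vs \<le> b"
    and stop: "set vs = V \<or> (\<exists>v \<in> V - set vs. 
             (card (set vs \<union> {v}) > b \<or> card (edges_of E (set vs \<union> {v})) > k))"
    and Fv: "Fvg = edges_of E (set vs)"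
    using fvg_unfold[OF vg] unfolding hv_def by blast
  obtain Vc where FE: "F \<subseteq> E" and VcV: "Vc \<subseteq> V" and cov: "is_vertex_cover Vc F" and cVc: "card Vc \<le> b"
    using feas unfolding feasible_TU_def by blast
  have FVc: "f F \<le> hv Vc" unfolding hv_def
    by (rule mono) (use FE cov eE in \<open>auto simp: is_vertex_cover_def edges_of_def\<close>)
  have fF: "f F \<ge> 0" using nonneg FE by auto
  have hVc: "hv Vc \<ge> 0" unfolding hv_def using nonneg eE by auto
  have fVc: "finite Vc" using fV VcV finite_subset by blast
  have hv0: "hv {} = 0" unfolding hv_def edges_of_def using f0 by simp
  define a where "a = 1 - exp (- min 1 (real (k div \<Delta>) / real b))"
  have a1: "a \<le> 1" unfolding a_def by simp
  show ?thesis
  proof (cases "set vs = V")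
    case True
    then have "hv Vc \<le> f Fvg" unfolding Fv hv_def using VcV by (intro mono) (auto simp: edges_of_def)
    moreover have "a * f F \<le> 1 * f F" by (rule mult_right_mono[OF a1 fF])
    ultimately show ?thesis using FVc unfolding a_def \<Delta>_def by simp
  next
    case False
    then obtain v where v: "v \<in> V - set vs"
      and cases: "card (set vs \<union> {v}) > b \<or> card (edges_of E (set vs \<union> {v})) > k"
      using stop by blast
    define t where "t = length vs"
    have ct: "card (set vs) = t" unfolding t_def using distinct_card[OF des] .
    have cins: "card (set vs \<union> {v}) = t + 1" using v ct by simp
    have key: "min 1 (real (k div \<Delta>) / real b) \<le> real t / real b"
      using cases
    proof
      assume "card (set vs \<union> {v}) > b"
      then have "t \<ge> b" using cins by simp
      then show ?thesis using b1 by (simp add: min_def divide_simps)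
    next
      assume "card (edges_of E (set vs \<union> {v})) > k"
      moreover have "card (edges_of E (set vs \<union> {v})) \<le> (t + 1) * \<Delta>"
        using edges_card_le[OF fV fE, of "set vs \<union> {v}"] vsV v cins unfolding \<Delta>_def by auto
      ultimately have "k < (t+1) * \<Delta>" by simp
      then have "k div \<Delta> < t + 1" using less_mult_imp_div_less by blast
      then have "real (k div \<Delta>) \<le> real t" by simp
      then have "real (k div \<Delta>) / real b \<le> real t / real b" using b1 by (simp add: divide_right_mono)
      then show ?thesis by linarith
    qed
    have gb: "(1 - (1 - 1/real b) ^ t) * hv Vc \<le> hv (set vs)"
      unfolding t_def
      by (rule greedy_bound[where U=V and C=V, OF monoV subV vsV order.refl fVc VcV cVc b1 grd hv0 hVc])
    have pe: "(1 - 1/real b) ^ t \<le> exp (- real t / real b)" by (rule pow_exp[OF b1])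
    have "exp (- real t / real b) \<le> exp (- min 1 (real (k div \<Delta>) / real b))"
      using key by simp
    then have ac: "a \<le> 1 - (1 - 1/real b) ^ t" unfolding a_def using pe by linarith
    have c0: "0 \<le> 1 - (1 - 1/real b) ^ t"
      using power_le_one[of "1 - 1/real b" t] b1 by simp
    have "a * f F \<le> (1 - (1 - 1/real b) ^ t) * f F" by (rule mult_right_mono[OF ac fF])
    also have "\<dots> \<le> (1 - (1 - 1/real b) ^ t) * hv Vc" by (rule mult_left_mono[OF FVc c0])
    also have "\<dots> \<le> f Fvg" using gb unfolding Fv hv_def .
    finally show ?thesis unfolding a_def \<Delta>_def .
  qed
qed

theorem theorem3:
  fixes V :: "'a set" and E :: "'a set set" and f :: "'a set set \<Rightarrow> real"
    and b k :: nat and Feg Fvg :: "'a set set"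
  assumes "simple_graph V E"
    and "b \<ge> 1" and "k \<ge> 1"
    and "\<forall>A \<subseteq> E. f A \<ge> 0"
    and "normalized E f" and "monotone_set_fun E f" and "submodular E f"
    and "max_degree V E \<ge> 1"
    and "edge_greedy_output E f b k Feg"
    and "vertex_greedy_output V E f b k Fvg"
  shows "let Fout = (if f Feg \<ge> f Fvg then Feg else Fvg) in
           feasible_TU V E b k Fout \<and>
           (\<forall>F. feasible_TU V E b k F \<longrightarrow>
                  alpha_bound b k (max_degree V E) * f F \<le> f Fout)"
proof -
  have fV: "finite V" and EV: "\<forall>e\<in>E. e \<subseteq> V" using assms(1) unfolding simple_graph_def by auto
  have fE: "finite E" using EV fV by (meson Pow_iff finite_Pow_iff finite_subset subsetI)
  have mono: "\<And>A B. A \<subseteq> B \<Longrightarrow> B \<subseteq> E \<Longrightarrow> f A \<le> f B"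
    using assms(6) unfolding monotone_set_fun_def by blast
  have sub: "\<And>A B. A \<subseteq> E \<Longrightarrow> B \<subseteq> E \<Longrightarrow> f (A \<union> B) + f (A \<inter> B) \<le> f A + f B"
    using assms(7) unfolding submodular_def by blast
  have f0: "f {} = 0" using assms(5) unfolding normalized_def .
  have fe: "feasible_TU V E b k Feg" by (rule feg_feasible[OF EV assms(9)])
  have fv: "feasible_TU V E b k Fvg" by (rule fvg_feasible[OF assms(10)])
  have bound: "alpha_bound b k (max_degree V E) * f F \<le> max (f Feg) (f Fvg)"
    if F: "feasible_TU V E b k F" for F
  proof -
    have fF: "f F \<ge> 0" using F assms(4) unfolding feasible_TU_def by auto
    have e1: "(1 - exp (- min 1 (real b / real k))) * f F \<le> f Feg"
      by (rule feg_value[OF fE mono sub f0 assms(3) F fF assms(9)])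
    have e2: "(1 - exp (- min 1 (real (k div max_degree V E) / real b))) * f F \<le> f Fvg"
      by (rule fvg_value[OF fV fE mono sub assms(4) f0 assms(2) assms(8) F assms(10)])
    show ?thesis
    proof (cases "real b / real k \<le> real (k div max_degree V E) / real b")
      case True
      then have "alpha_bound b k (max_degree V E) = 1 - exp (- min 1 (real (k div max_degree V E) / real b))"
        unfolding alpha_bound_def Let_def by (simp add: max_def)
      then show ?thesis using e2 by simp
    next
      case False
      then have "alpha_bound b k (max_degree V E) = 1 - exp (- min 1 (real b / real k))"
        unfolding alpha_bound_def Let_def by (simp add: max_def)
      then show ?thesis using e1 by simp
    qed
  qed
  show ?thesis unfolding Let_def using fe fv bound by (auto simp: max_def)
qed


end
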